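(* Assume $\operatorname{rk}L=2$, $\omega$ non-degenerate, and all exchange collections consist of primitive vectors. (a) If $V$ is empty then $\mathcal U(V)=\mathcal Q[L^*]$. (b) Let $V$ be an exchange collection and $(V_\alpha)_\alpha$ a nonempty family of exchange collections with $m_V(v)=\max_\alpha m_{V_\alpha}(v)$ for every $v\in L$. Then $\mathcal U(V)=\bigcap_\alpha\mathcal U(V_\alpha)$. In particular $\mathcal U(V)=\bigcap_{v\in L}\mathcal U(\{m_V(v)\times v\})$. (c) Let $V$ consist of a vector $v_1$ with multiplicity $m_+\ge1$, the vector $-v_1$ with multiplicity $m_-\ge0$, and pairwise distinct vectors $v_k$ ($k\ge3$) not collinear with $v_1$, with multiplicities $m_k\ge0$. Put $V_0=\{m_+\times v_1,\ m_-\times(-v_1)\}$ and $V_k=\{1\times v_1,\ m_k\times v_k\}$ for $k\ge3$. Then $\mathcal U(V)=\mathcal U(V_0)\cap\bigcap_{k\ge3}\mathcal U(V_k)$. (d) With $V$ as in (c), the mutation $V'$ of $V$ in (one copy of) $v_1$ consists of $-v_1$ with multiplicity $m_-+1$, $v_1$ with multiplicity $m_+-1$, and $v_k'=v_k+\max(0,\omega(v_1,v_k))v_1$ with multiplicity $m_k$ ($k\ge3$). Put $V_0'=\{(m_-+1)\times(-v_1),\ (m_+-1)\times v_1\}$ and $V_k'=\{1\times(-v_1),\ m_k\times v_k'\}$. Then $\mathcal U(V')=\mathcal U(V_0')\cap\bigcap_{k\ge3}\mathcal U(V_k')$.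
   Context: Let $L$ be a lattice, $L^*=\mathrm{Hom}(L,\mathbb Z)$, $(\cdot,\cdot)$ the canonical pairing, and $\omega$ a skew-symmetric integral bilinear form on $L$. Let $\mathcal Q=\mathbb Q(e^{2\pi i\mathbb Q})$ be $\mathbb Q$ with all roots of unity adjoined, $\mathcal Q[L^*]$ the group algebra of $L^*$ with monomials $X^m$, and $\mathbb K_L$ its fraction field. For $v\in L$, $\mu_v^*$ is the $\mathcal Q$-algebra automorphism of $\mathbb K_L$ with $\mu_v^*(X^m)=X^m(1+X^{\omega(\cdot,v)})^{-(m,v)}$, where $\omega(\cdot,v)\in L^*$ is $w\mapsto\omega(w,v)$. An exchange collection is a finite tuple of vectors of $L$ (repetitions allowed) with multiplicity function $m_V(v)=\#\{i:v_i=v\}$; $\{m_1\times u_1,\dots\}$ denotes the collection containing $u_j$ with multiplicity $m_j$. The upper bound is $\mathcal U(V)=\mathcal Q[L^*]\cap\bigcap_{v\in L}(\mu_v^* )^{m_V(v)}(\mathcal Q[L^*])$. The mutation of $V=(v_1,\dots,v_n)$ in direction $j$ replaces $v_j$ by $-v_j$ and each $v_i$ ($i\neq j$) by $v_i+\max(0,\omega(v_j,v_i))v_j$. *)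

theory Defs
  imports Complex_Main "HOL-Library.Poly_Mapping" "HOL-Library.Product_Lexorder"
    "HOL-Library.Product_Plus" "HOL-Library.Multiset"
    "HOL-Computational_Algebra.Fraction_Field"
begin

text \<open>It is only used so that the library provides the integral-domain instance of the
  group algebra (finitely supported functions int x int to complex), needed to form its fraction field.\<close>

instance prod :: (ordered_cancel_comm_monoid_add, ordered_cancel_comm_monoid_add)
  ordered_cancel_comm_monoid_add
proof
  fix a b c :: "'a \<times> 'b"
  assume "a \<le> b"
  then show "c + a \<le> c + b"
    by (cases a; cases b; cases c)
       (auto simp: less_eq_prod_def less_prod_def add_strict_left_mono add_left_mono)
qed

text \<open>The lattice L of rank 2 is identified with int \<times> int, and L^* = Hom(L,Z) with
  int \<times> int via the standard dual basis, so that the canonical pairing is the dot product.\<close>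

type_synonym lat = "int \<times> int"
type_synonym dlat = "int \<times> int"

definition pairing :: "dlat \<Rightarrow> lat \<Rightarrow> int" where
  "pairing m v = fst m * fst v + snd m * snd v"

definition smul :: "int \<Rightarrow> lat \<Rightarrow> lat" where
  "smul c v = (c * fst v, c * snd v)"

definition bilinear_form :: "(lat \<Rightarrow> lat \<Rightarrow> int) \<Rightarrow> bool" where
  "bilinear_form \<omega> \<longleftrightarrow> (\<forall>u u' v. \<omega> (u + u') v = \<omega> u v + \<omega> u' v)
                       \<and> (\<forall>u v v'. \<omega> u (v + v') = \<omega> u v + \<omega> u v')"

definition skew_form :: "(lat \<Rightarrow> lat \<Rightarrow> int) \<Rightarrow> bool" where
  "skew_form \<omega> \<longleftrightarrow> (\<forall>u v. \<omega> u v = - \<omega> v u)"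

definition nondegenerate :: "(lat \<Rightarrow> lat \<Rightarrow> int) \<Rightarrow> bool" where
  "nondegenerate \<omega> \<longleftrightarrow> (\<forall>u. (\<forall>v. \<omega> u v = 0) \<longrightarrow> u = 0)"

definition primitive :: "lat \<Rightarrow> bool" where
  "primitive v \<longleftrightarrow> gcd (fst v) (snd v) = 1"

definition collinear :: "lat \<Rightarrow> lat \<Rightarrow> bool" where
  "collinear u v \<longleftrightarrow> fst u * snd v = snd u * fst v"

definition omega_dual :: "(lat \<Rightarrow> lat \<Rightarrow> int) \<Rightarrow> lat \<Rightarrow> dlat" where
  "omega_dual \<omega> v = (\<omega> (1,0) v, \<omega> (0,1) v)"

text \<open>The field Q(e^{2 pi i Q}): the subfield of C generated by all roots of unity.\<close>
definition subfield_C :: "complex set \<Rightarrow> bool" where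
  "subfield_C F \<longleftrightarrow> 0 \<in> F \<and> 1 \<in> F \<and> (\<forall>x\<in>F. \<forall>y\<in>F. x + y \<in> F \<and> x * y \<in> F \<and> x - y \<in> F)
     \<and> (\<forall>x\<in>F. inverse x \<in> F)"

definition Qcyc :: "complex set" where
  "Qcyc = \<Inter> {F. subfield_C F \<and> {z. \<exists>n>0. z ^ n = 1} \<subseteq> F}"

text \<open>Group algebra C[L^*] and its fraction field; Q[L^*] and K_L sit inside these.\<close>
type_synonym galg = "dlat \<Rightarrow>\<^sub>0 complex"
type_synonym frac = "galg fract"

definition monX :: "dlat \<Rightarrow> frac" where
  "monX m = Fract (Poly_Mapping.single m 1) 1"

definition const :: "complex \<Rightarrow> frac" where
  "const c = Fract (Poly_Mapping.single 0 c) 1"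

definition laurentQ :: "frac set" where
  "laurentQ = {Fract p 1 | p. \<forall>m. Poly_Mapping.lookup p m \<in> Qcyc}"

definition mu_poly :: "(lat \<Rightarrow> lat \<Rightarrow> int) \<Rightarrow> lat \<Rightarrow> galg \<Rightarrow> frac" where
  "mu_poly \<omega> v p = (\<Sum>m\<in>Poly_Mapping.keys p.
      const (Poly_Mapping.lookup p m) * monX m
        * (1 + monX (omega_dual \<omega> v)) powi (- pairing m v))"

text \<open>mu_v^* on the fraction field (independent of the chosen representative).\<close>
definition mu :: "(lat \<Rightarrow> lat \<Rightarrow> int) \<Rightarrow> lat \<Rightarrow> frac \<Rightarrow> frac" where
  "mu \<omega> v x = (let pq = (SOME pq. snd pq \<noteq> 0 \<and> x = Fract (fst pq) (snd pq))
                in mu_poly \<omega> v (fst pq) / mu_poly \<omega> v (snd pq))"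

text \<open>Exchange collections are represented by multisets of lattice vectors
  (the upper bound depends only on the multiplicity function m_V = count V).\<close>
definition upper :: "(lat \<Rightarrow> lat \<Rightarrow> int) \<Rightarrow> lat multiset \<Rightarrow> frac set" where
  "upper \<omega> V = laurentQ \<inter> (\<Inter>v. ((mu \<omega> v) ^^ (count V v)) ` laurentQ)"

definition prim_coll :: "lat multiset \<Rightarrow> bool" where
  "prim_coll V \<longleftrightarrow> (\<forall>v\<in>#V. primitive v)"

definition mutate :: "(lat \<Rightarrow> lat \<Rightarrow> int) \<Rightarrow> lat list \<Rightarrow> nat \<Rightarrow> lat list" where
  "mutate \<omega> xs j = map (\<lambda>i. if i = j then - (xs ! j)
                            else xs ! i + smul (max 0 (\<omega> (xs ! j) (xs ! i))) (xs ! j))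
                     [0..<length xs]"

end

theory Submission
  imports Defs
begin


definition emb :: "galg \<Rightarrow> frac" where "emb p = Fract p 1"
lemma emb_add: "emb (p + q) = emb p + emb q" by (simp add: emb_def)
lemma emb_mult: "emb (p * q) = emb p * emb q" by (simp add: emb_def)
lemma emb_0[simp]: "emb 0 = 0" by (simp add: emb_def fract_collapse)
lemma emb_1[simp]: "emb 1 = 1" by (simp add: emb_def fract_collapse)
lemma emb_inj: "emb p = emb q \<longleftrightarrow> p = q" by (simp add: emb_def eq_fract)
lemma emb_sum: "emb (sum f S) = (\<Sum>x\<in>S. emb (f x))"
  by (induction S rule: infinite_finite_induct) (auto simp: emb_add)
lemma emb_power: "emb (p ^ n) = emb p ^ n"
  by (induction n) (auto simp: emb_mult)

lemma Qcyc_0: "0 \<in> Qcyc" and Qcyc_1: "1 \<in> Qcyc"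
  by (auto simp: Qcyc_def subfield_C_def)
lemma Qcyc_add: "x \<in> Qcyc \<Longrightarrow> y \<in> Qcyc \<Longrightarrow> x + y \<in> Qcyc"
  by (auto simp: Qcyc_def subfield_C_def)
lemma Qcyc_mult: "x \<in> Qcyc \<Longrightarrow> y \<in> Qcyc \<Longrightarrow> x * y \<in> Qcyc"
  by (auto simp: Qcyc_def subfield_C_def)

definition Qp :: "galg \<Rightarrow> bool" where "Qp p \<longleftrightarrow> (\<forall>m. Poly_Mapping.lookup p m \<in> Qcyc)"

lemma laurentQ_eq: "laurentQ = emb ` {p. Qp p}"
  by (auto simp: laurentQ_def emb_def Qp_def)

lemma Qp_0[simp]: "Qp 0" by (simp add: Qp_def Qcyc_0)
lemma Qp_add: "Qp p \<Longrightarrow> Qp q \<Longrightarrow> Qp (p + q)"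
  by (simp add: Qp_def lookup_add Qcyc_add)
lemma Qp_sum: "(\<And>x. x \<in> S \<Longrightarrow> Qp (f x)) \<Longrightarrow> Qp (sum f S)"
  by (induction S rule: infinite_finite_induct) (auto simp: Qp_add)
lemma Qp_single: "c \<in> Qcyc \<Longrightarrow> Qp (Poly_Mapping.single m c)"
  by (auto simp: Qp_def lookup_single when_def Qcyc_0)

lemma pm_expand: "p = (\<Sum>m\<in>Poly_Mapping.keys p. Poly_Mapping.single m (Poly_Mapping.lookup p m))"
proof (rule poly_mapping_eqI)
  fix n
  show "Poly_Mapping.lookup p n = Poly_Mapping.lookup (\<Sum>m\<in>Poly_Mapping.keys p. Poly_Mapping.single m (Poly_Mapping.lookup p m)) n"
    by (simp add: lookup_sum lookup_single when_def in_keys_iff)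
qed

lemma Qp_mult_single: "Qp q \<Longrightarrow> c \<in> Qcyc \<Longrightarrow> Qp (Poly_Mapping.single m c * q)"
proof -
  assume q: "Qp q" and c: "c \<in> Qcyc"
  have "Poly_Mapping.single m c * q = (\<Sum>n\<in>Poly_Mapping.keys q. Poly_Mapping.single m c * Poly_Mapping.single n (Poly_Mapping.lookup q n))"
    by (subst pm_expand[of q]) (simp add: sum_distrib_left)
  also have "Qp \<dots>"
    using q c unfolding mult_single by (intro Qp_sum Qp_single Qcyc_mult) (auto simp: Qp_def)
  finally show ?thesis .
qed

lemma Qp_mult: "Qp p \<Longrightarrow> Qp q \<Longrightarrow> Qp (p * q)"
proof -
  assume p: "Qp p" and q: "Qp q"
  have "p * q = (\<Sum>m\<in>Poly_Mapping.keys p. Poly_Mapping.single m (Poly_Mapping.lookup p m) * q)"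
    by (subst pm_expand[of p]) (simp add: sum_distrib_right)
  also have "Qp \<dots>"
    using p q by (intro Qp_sum Qp_mult_single) (auto simp: Qp_def)
  finally show ?thesis .
qed

lemma Qp_1[simp]: "Qp 1"
  by (simp add: Qp_def lookup_one when_def Qcyc_0 Qcyc_1)

lemma Qp_power: "Qp p \<Longrightarrow> Qp (p ^ n)"
  by (induction n) (auto simp: Qp_mult)

lemma laurentQ_0: "0 \<in> laurentQ"
  by (auto simp: laurentQ_eq intro: image_eqI[of _ _ 0])
lemma laurentQ_add: "x \<in> laurentQ \<Longrightarrow> y \<in> laurentQ \<Longrightarrow> x + y \<in> laurentQ"
  by (auto simp: laurentQ_eq emb_add[symmetric] intro!: imageI Qp_add)
lemma laurentQ_sum: "(\<And>x. x \<in> S \<Longrightarrow> f x \<in> laurentQ) \<Longrightarrow> sum f S \<in> laurentQ"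
  by (induction S rule: infinite_finite_induct) (auto simp: laurentQ_add laurentQ_0)




lemma pairing_add[simp]: "pairing (a + b) v = pairing a v + pairing b v"
  by (simp add: pairing_def algebra_simps)
lemma pairing_0[simp]: "pairing 0 v = 0"
  by (simp add: pairing_def)

lemma emb_single_mult: "emb (Poly_Mapping.single m c) * emb (Poly_Mapping.single n d)
   = emb (Poly_Mapping.single (m + n) (c * d))"
  by (simp add: emb_mult[symmetric] mult_single)

context
  fixes \<omega> :: "lat \<Rightarrow> lat \<Rightarrow> int" and v :: lat
  assumes wv: "pairing (omega_dual \<omega> v) v = 0"
begin

definition PP :: galg where
  "PP = Poly_Mapping.single 0 1 + Poly_Mapping.single (omega_dual \<omega> v) 1"

lemma PP_keys: "Poly_Mapping.keys PP \<subseteq> {m. pairing m v = 0}"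
  using keys_add[of "Poly_Mapping.single 0 (1::complex)" "Poly_Mapping.single (omega_dual \<omega> v) 1"] wv
  by (auto simp: PP_def)

lemma PP_nz: "PP \<noteq> 0"
proof
  assume "PP = 0"
  hence "Poly_Mapping.lookup PP 0 = 0" by simp
  thus False
    by (cases "omega_dual \<omega> v = 0") (auto simp: PP_def lookup_add lookup_single when_def lookup_numeral)
qed

lemma PPpow_nz: "PP ^ n \<noteq> 0" using PP_nz by simp

lemma D_nz: "emb PP \<noteq> 0"
  using PP_nz emb_inj[of PP 0] by simp

definition E :: "nat \<Rightarrow> galg \<Rightarrow> frac" where
  "E j p = (\<Sum>m\<in>Poly_Mapping.keys p. emb (Poly_Mapping.single m (Poly_Mapping.lookup p m))
              * emb PP powi (- (int j * pairing m v)))"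

lemma E_superset:
  assumes "finite S" "Poly_Mapping.keys p \<subseteq> S"
  shows "E j p = (\<Sum>m\<in>S. emb (Poly_Mapping.single m (Poly_Mapping.lookup p m))
              * emb PP powi (- (int j * pairing m v)))"
  unfolding E_def
  by (rule sum.mono_neutral_left[OF assms]) (auto simp: in_keys_iff)

lemma E_add: "E j (p + q) = E j p + E j q"
proof -
  let ?S = "Poly_Mapping.keys p \<union> Poly_Mapping.keys q"
  have f: "finite ?S" by simp
  show ?thesis
    apply (subst E_superset[OF f keys_add])
    apply (subst E_superset[OF f, of p], blast)
    apply (subst E_superset[OF f, of q], blast)
    apply (simp add: lookup_add single_add emb_add distrib_right sum.distrib)
    done
qed

lemma E_0[simp]: "E j 0 = 0" by (simp add: E_def)

lemma E_sum: "E j (sum f S) = (\<Sum>x\<in>S. E j (f x))"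
  by (induction S rule: infinite_finite_induct) (auto simp: E_add)

lemma E_single: "E j (Poly_Mapping.single m c) = emb (Poly_Mapping.single m c) * emb PP powi (- (int j * pairing m v))"
  by (cases "c = 0") (simp_all add: E_def)

lemma E_expand: "E j p = (\<Sum>m\<in>Poly_Mapping.keys p. E j (Poly_Mapping.single m (Poly_Mapping.lookup p m)))"
  unfolding E_single by (simp add: E_def)

lemma E_mult_single:
  "E j (Poly_Mapping.single m c * Poly_Mapping.single n d)
     = E j (Poly_Mapping.single m c) * E j (Poly_Mapping.single n d)"
  using D_nz
  by (simp add: mult_single E_single emb_single_mult[symmetric] power_int_add[symmetric]
        algebra_simps)

lemma E_mult: "E j (p * q) = E j p * E j q"
proof -
  have "E j (p * q) = E j ((\<Sum>m\<in>Poly_Mapping.keys p. Poly_Mapping.single m (Poly_Mapping.lookup p m))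
       * (\<Sum>n\<in>Poly_Mapping.keys q. Poly_Mapping.single n (Poly_Mapping.lookup q n)))"
    by (simp flip: pm_expand)
  also have "\<dots> = (\<Sum>m\<in>Poly_Mapping.keys p. \<Sum>n\<in>Poly_Mapping.keys q.
        E j (Poly_Mapping.single m (Poly_Mapping.lookup p m) * Poly_Mapping.single n (Poly_Mapping.lookup q n)))"
    by (simp add: sum_product E_sum)
  also have "\<dots> = (\<Sum>m\<in>Poly_Mapping.keys p. E j (Poly_Mapping.single m (Poly_Mapping.lookup p m)))
        * (\<Sum>n\<in>Poly_Mapping.keys q. E j (Poly_Mapping.single n (Poly_Mapping.lookup q n)))"
    by (simp add: E_mult_single sum_product)
  also have "\<dots> = E j p * E j q" by (simp flip: E_expand)
  finally show ?thesis .
qed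

lemma E_1[simp]: "E j 1 = 1"
  using E_single[of j 0 1] by simp

lemma E_0_id: "E 0 p = emb p"
  by (subst (2) pm_expand) (simp add: E_def emb_sum)

lemma mu_poly_eq: "mu_poly \<omega> v p = E 1 p"
proof -
  have "Fraction_Field.Fract PP 1 = 1 + Fraction_Field.Fract (Poly_Mapping.single (omega_dual \<omega> v) 1) 1"
  proof -
    have "emb (1 + Poly_Mapping.single (omega_dual \<omega> v) 1) = 1 + emb (Poly_Mapping.single (omega_dual \<omega> v) 1)"
      by (simp add: emb_add)
    thus ?thesis by (simp add: PP_def emb_def)
  qed
  thus ?thesis
    by (simp add: mu_poly_def E_def const_def monX_def emb_def mult_single)
qed

definition restr :: "int \<Rightarrow> galg \<Rightarrow> galg" where
  "restr k p = (\<Sum>m\<in>{m\<in>Poly_Mapping.keys p. pairing m v = k}. Poly_Mapping.single m (Poly_Mapping.lookup p m))"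

lemma lookup_restr: "Poly_Mapping.lookup (restr k p) n = (if pairing n v = k then Poly_Mapping.lookup p n else 0)"
  by (auto simp: restr_def lookup_sum lookup_single when_def in_keys_iff)

lemma restr_add: "restr k (p + q) = restr k p + restr k q"
  by (rule poly_mapping_eqI) (simp add: lookup_restr lookup_add)

lemma restr_0[simp]: "restr k 0 = 0"
  by (rule poly_mapping_eqI) (simp add: lookup_restr)

lemma restr_sum: "restr k (sum f S) = (\<Sum>x\<in>S. restr k (f x))"
  by (induction S rule: infinite_finite_induct) (auto simp: restr_add)

lemma restr_id: "Poly_Mapping.keys p \<subseteq> {m. pairing m v = k} \<Longrightarrow> restr k p = p"
  by (rule poly_mapping_eqI) (auto simp: lookup_restr in_keys_iff)

lemma restr_zero: "Poly_Mapping.keys p \<inter> {m. pairing m v = k} = {} \<Longrightarrow> restr k p = 0"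
  by (rule poly_mapping_eqI) (auto simp: lookup_restr in_keys_iff)

lemma keys_restr: "Poly_Mapping.keys (restr k p) \<subseteq> {m. pairing m v = k}"
  by (auto simp: in_keys_iff lookup_restr split: if_splits)

lemma restr_restr: "restr k (restr k' p) = (if k = k' then restr k p else 0)"
  by (rule poly_mapping_eqI) (simp add: lookup_restr)

lemma sum_restr: "p = (\<Sum>k\<in>(\<lambda>m. pairing m v) ` Poly_Mapping.keys p. restr k p)"
proof (rule poly_mapping_eqI)
  fix n
  have "(\<Sum>k\<in>(\<lambda>m. pairing m v) ` Poly_Mapping.keys p. Poly_Mapping.lookup (restr k p) n)
      = (\<Sum>k\<in>(\<lambda>m. pairing m v) ` Poly_Mapping.keys p. if k = pairing n v then Poly_Mapping.lookup p n else 0)"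
    by (rule sum.cong) (auto simp: lookup_restr)
  also have "\<dots> = Poly_Mapping.lookup p n"
    by (subst sum.delta) (auto simp: in_keys_iff)
  finally show "Poly_Mapping.lookup p n = Poly_Mapping.lookup (\<Sum>k\<in>(\<lambda>m. pairing m v) ` Poly_Mapping.keys p. restr k p) n"
    by (simp add: lookup_sum)
qed

lemma restr_Qp: "Qp p \<Longrightarrow> Qp (restr k p)"
  by (auto simp: Qp_def lookup_restr Qcyc_0)

lemma keys_mult_deg:
  assumes "Poly_Mapping.keys p \<subseteq> {m. pairing m v = k}" "Poly_Mapping.keys h \<subseteq> {m. pairing m v = 0}"
  shows "Poly_Mapping.keys (p * h) \<subseteq> {m. pairing m v = k}"
proof
  fix x assume "x \<in> Poly_Mapping.keys (p * h)"
  then obtain a b where "x = a + b" "a \<in> Poly_Mapping.keys p" "b \<in> Poly_Mapping.keys h"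
    using keys_mult[of p h] by blast
  thus "x \<in> {m. pairing m v = k}" using assms by force
qed

lemma keys_PPpow: "Poly_Mapping.keys (PP ^ n) \<subseteq> {m. pairing m v = 0}"
proof (induction n)
  case 0 show ?case by simp
next
  case (Suc n)
  show ?case using keys_mult_deg[OF PP_keys Suc] by (simp add: mult.commute)
qed

lemma restr_mult:
  assumes h: "Poly_Mapping.keys h \<subseteq> {m. pairing m v = 0}"
  shows "restr k (p * h) = restr k p * h"
proof -
  let ?K = "(\<lambda>m. pairing m v) ` Poly_Mapping.keys p"
  have "restr k (p * h) = restr k ((\<Sum>k'\<in>?K. restr k' p) * h)"
    by (simp flip: sum_restr)
  also have "\<dots> = (\<Sum>k'\<in>?K. restr k (restr k' p * h))"
    by (simp add: sum_distrib_right restr_sum)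
  also have "\<dots> = (\<Sum>k'\<in>?K. if k' = k then restr k p * h else 0)"
  proof (rule sum.cong)
    fix k' assume "k' \<in> ?K"
    have kk: "Poly_Mapping.keys (restr k' p * h) \<subseteq> {m. pairing m v = k'}"
      by (rule keys_mult_deg[OF keys_restr h])
    show "restr k (restr k' p * h) = (if k' = k then restr k p * h else 0)"
    proof (cases "k' = k")
      case True thus ?thesis using restr_id[OF kk] by simp
    next
      case False thus ?thesis using kk restr_zero[of "restr k' p * h" k] by auto
    qed
  qed simp
  also have "\<dots> = restr k p * h"
  proof (cases "k \<in> ?K")
    case True thus ?thesis by (simp add: sum.delta')
  next
    case False
    hence "restr k p = 0" by (intro restr_zero) auto
    thus ?thesis using False by (simp add: sum.delta')
  qed
  finally show ?thesis .
qed

lemma E_graded: "E j p = (\<Sum>k\<in>(\<lambda>m. pairing m v) ` Poly_Mapping.keys p. emb (restr k p) * emb PP powi (- (int j * k)))"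
proof -
  have "E j p = (\<Sum>k\<in>(\<lambda>m. pairing m v) ` Poly_Mapping.keys p. \<Sum>m\<in>{m\<in>Poly_Mapping.keys p. pairing m v = k}.
     emb (Poly_Mapping.single m (Poly_Mapping.lookup p m)) * emb PP powi (- (int j * pairing m v)))"
    unfolding E_def by (rule sum.group[symmetric]) auto
  also have "\<dots> = (\<Sum>k\<in>(\<lambda>m. pairing m v) ` Poly_Mapping.keys p. \<Sum>m\<in>{m\<in>Poly_Mapping.keys p. pairing m v = k}.
     emb (Poly_Mapping.single m (Poly_Mapping.lookup p m)) * emb PP powi (- (int j * k)))"
    by (intro sum.cong) auto
  also have "\<dots> = (\<Sum>k\<in>(\<lambda>m. pairing m v) ` Poly_Mapping.keys p. emb (restr k p) * emb PP powi (- (int j * k)))"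
    by (simp add: restr_def emb_sum sum_distrib_right)
  finally show ?thesis .
qed

lemma E_key:
  assumes "E j p = emb F"
  shows "\<exists>N::nat. (\<forall>k\<in>(\<lambda>m. pairing m v) ` Poly_Mapping.keys p. int j * k \<le> int N) \<and>
     (\<forall>k. restr k F * PP ^ N = restr k p * PP ^ nat (int N - int j * k))"
proof -
  let ?K = "(\<lambda>m. pairing m v) ` Poly_Mapping.keys p"
  define N where "N = (\<Sum>k\<in>?K. nat \<bar>int j * k\<bar>)"
  have Nge: "int j * k \<le> int N" if "k \<in> ?K" for k
  proof -
    have "nat \<bar>int j * k\<bar> \<le> N" unfolding N_def
      by (rule member_le_sum) (use that in auto)
    thus ?thesis by linarith
  qed
  have pw: "emb PP powi (- (int j * k)) * emb PP ^ N = emb PP ^ nat (int N - int j * k)" if "k \<in> ?K" for k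
  proof -
    have "emb PP powi (- (int j * k)) * emb PP ^ N = emb PP powi (- (int j * k)) * emb PP powi (int N)"
      by simp
    also have "\<dots> = emb PP powi (- (int j * k) + int N)"
      using D_nz by (rule power_int_add[symmetric, OF disjI1])
    also have "\<dots> = emb PP powi (int N - int j * k)"
      by (rule arg_cong[where f="\<lambda>e. emb PP powi e"]) simp
    also have "\<dots> = emb PP ^ nat (int N - int j * k)"
      using Nge[OF that] by (simp add: power_int_def)
    finally show ?thesis .
  qed
  have "emb (F * PP ^ N) = E j p * emb PP ^ N"
    by (simp add: assms emb_mult emb_power)
  also have "\<dots> = (\<Sum>k\<in>?K. emb (restr k p) * (emb PP powi (- (int j * k)) * emb PP ^ N))"
    by (simp add: E_graded sum_distrib_right mult.assoc)
  also have "\<dots> = (\<Sum>k\<in>?K. emb (restr k p) * emb PP ^ nat (int N - int j * k))"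
    by (rule sum.cong) (simp_all add: pw)
  also have "\<dots> = emb (\<Sum>k\<in>?K. restr k p * PP ^ nat (int N - int j * k))"
    by (simp add: emb_sum emb_mult emb_power)
  finally have eq: "F * PP ^ N = (\<Sum>k\<in>?K. restr k p * PP ^ nat (int N - int j * k))"
    by (simp add: emb_inj)
  have "restr k' F * PP ^ N = restr k' p * PP ^ nat (int N - int j * k')" for k'
  proof -
    have "restr k' F * PP ^ N = restr k' (F * PP ^ N)"
      by (simp add: restr_mult[OF keys_PPpow])
    also have "\<dots> = (\<Sum>k\<in>?K. restr k' (restr k p) * PP ^ nat (int N - int j * k))"
      by (simp add: eq restr_sum restr_mult[OF keys_PPpow])
    also have "\<dots> = (\<Sum>k\<in>?K. if k = k' then restr k' p * PP ^ nat (int N - int j * k') else 0)"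
      by (rule sum.cong) (auto simp: restr_restr)
    also have "\<dots> = restr k' p * PP ^ nat (int N - int j * k')"
    proof (cases "k' \<in> ?K")
      case True thus ?thesis by (simp add: sum.delta)
    next
      case False
      hence "restr k' p = 0" by (intro restr_zero) auto
      thus ?thesis using False by (simp add: sum.delta)
    qed
    finally show ?thesis .
  qed
  thus ?thesis using Nge by blast
qed

lemma E_inj: "E j q = 0 \<Longrightarrow> q = 0"
proof -
  assume "E j q = 0"
  hence "E j q = emb 0" by simp
  from E_key[OF this] obtain N where
    N: "\<And>k. restr k 0 * PP ^ N = restr k q * PP ^ nat (int N - int j * k)" by blast
  have "restr k q = 0" for k
    using N[of k] PP_nz by simp
  thus "q = 0" by (subst sum_restr) simp
qed

lemma E1_nz: "q \<noteq> 0 \<Longrightarrow> E 1 q \<noteq> 0"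
  using E_inj by blast

lemma mu_Fract:
  assumes q: "q \<noteq> 0"
  shows "mu \<omega> v (Fraction_Field.Fract p q) = E 1 p / E 1 q"
proof -
  let ?P = "\<lambda>pq. snd pq \<noteq> 0 \<and> Fraction_Field.Fract p q = Fraction_Field.Fract (fst pq) (snd pq)"
  have ex: "\<exists>pq. ?P pq" using q by (intro exI[of _ "(p, q)"]) simp
  define pq where "pq = (SOME pq. ?P pq)"
  have P: "?P pq" unfolding pq_def by (rule someI_ex[OF ex])
  obtain a b where ab: "pq = (a, b)" by (cases pq)
  have b: "b \<noteq> 0" and eq: "p * b = a * q" using P q by (auto simp: ab eq_fract)
  have "E 1 p * E 1 b = E 1 a * E 1 q" using eq by (metis E_mult)
  hence "E 1 a / E 1 b = E 1 p / E 1 q"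
    using E1_nz[OF b] E1_nz[OF q] by (simp add: field_simps)
  thus ?thesis unfolding mu_def pq_def[symmetric] by (simp add: ab mu_poly_eq)
qed

lemma mu_emb: "mu \<omega> v (emb p) = E 1 p"
  by (simp add: emb_def mu_Fract)

lemma mu_add: "mu \<omega> v (x + y) = mu \<omega> v x + mu \<omega> v y"
proof -
  obtain a b where x: "x = Fraction_Field.Fract a b" "b \<noteq> 0" by (cases x)
  obtain c d where y: "y = Fraction_Field.Fract c d" "d \<noteq> 0" by (cases y)
  show ?thesis using E1_nz[OF x(2)] E1_nz[OF y(2)] x y
    by (simp add: mu_Fract E_add E_mult field_simps)
qed

lemma mu_mult: "mu \<omega> v (x * y) = mu \<omega> v x * mu \<omega> v y"
proof -
  obtain a b where x: "x = Fraction_Field.Fract a b" "b \<noteq> 0" by (cases x)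
  obtain c d where y: "y = Fraction_Field.Fract c d" "d \<noteq> 0" by (cases y)
  show ?thesis using E1_nz[OF x(2)] E1_nz[OF y(2)] x y
    by (simp add: mu_Fract E_mult field_simps)
qed

lemma mu_0[simp]: "mu \<omega> v 0 = 0"
  using mu_emb[of 0] by simp

lemma mu_1[simp]: "mu \<omega> v 1 = 1"
  using mu_emb[of 1] by simp

lemma mu_inverse: "mu \<omega> v (inverse x) = inverse (mu \<omega> v x)"
proof -
  obtain a b where x: "x = Fraction_Field.Fract a b" "b \<noteq> 0" by (cases x)
  show ?thesis
  proof (cases "a = 0")
    case True thus ?thesis using x by (simp add: fract_collapse)
  next
    case False
    thus ?thesis using x E1_nz[OF x(2)] E1_nz[OF False] by (simp add: mu_Fract)
  qed
qed

lemma mu_power: "mu \<omega> v (x ^ n) = mu \<omega> v x ^ n"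
  by (induction n) (simp_all add: mu_mult)

lemma mu_powi: "mu \<omega> v (x powi n) = mu \<omega> v x powi n"
  by (simp add: power_int_def mu_power mu_inverse)

lemma mu_sum: "mu \<omega> v (sum f S) = (\<Sum>x\<in>S. mu \<omega> v (f x))"
  by (induction S rule: infinite_finite_induct) (auto simp: mu_add)

lemma E1_PP: "E 1 PP = emb PP" unfolding PP_def using wv by (simp add: E_add E_single emb_add)

lemma mu_D: "mu \<omega> v (emb PP) = emb PP"
  using mu_emb[of PP] E1_PP by simp

lemma mu_iter: "(mu \<omega> v ^^ j) (emb p) = E j p"
proof (induction j)
  case 0 thus ?case by (simp add: E_0_id)
next
  case (Suc j)
  have "(mu \<omega> v ^^ Suc j) (emb p) = mu \<omega> v (E j p)" by (simp add: Suc)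
  also have "\<dots> = (\<Sum>m\<in>Poly_Mapping.keys p. E 1 (Poly_Mapping.single m (Poly_Mapping.lookup p m))
              * emb PP powi (- (int j * pairing m v)))"
    unfolding E_def[of j p] by (simp only: mu_sum mu_mult mu_powi mu_emb E1_PP)
  also have "\<dots> = E (Suc j) p"
    unfolding E_def[of "Suc j" p]
  proof (rule sum.cong)
    fix m
    have "emb PP powi (- pairing m v) * emb PP powi (- (int j * pairing m v))
        = emb PP powi (- pairing m v + - (int j * pairing m v))"
      using D_nz by (rule power_int_add[symmetric, OF disjI1])
    also have "\<dots> = emb PP powi (- (int (Suc j) * pairing m v))"
      by (rule arg_cong[where f="\<lambda>e. emb PP powi e"]) (simp add: algebra_simps)
    finally show "E 1 (Poly_Mapping.single m (Poly_Mapping.lookup p m)) * emb PP powi (- (int j * pairing m v))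
      = emb (Poly_Mapping.single m (Poly_Mapping.lookup p m)) * emb PP powi (- (int (Suc j) * pairing m v))"
      by (simp add: E_single mult.assoc)
  qed simp
  finally show ?case .
qed

lemma Qp_PP: "Qp PP"
  unfolding PP_def by (intro Qp_add Qp_single Qcyc_1)

lemma emb_laurentQ: "Qp p \<Longrightarrow> emb p \<in> laurentQ"
  by (simp add: laurentQ_eq)

lemma D_powi_nat: "e \<ge> 0 \<Longrightarrow> emb PP powi e = emb (PP ^ nat e)"
  by (simp add: power_int_def emb_power)

lemma mono_step:
  assumes ba: "b \<le> a" and xL: "x \<in> laurentQ" and xa: "x \<in> (mu \<omega> v ^^ a) ` laurentQ"
  shows "x \<in> (mu \<omega> v ^^ b) ` laurentQ"
proof -
  obtain g where g: "Qp g" and xg: "x = (mu \<omega> v ^^ a) (emb g)"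
    using xa by (auto simp: laurentQ_eq)
  obtain F where F: "Qp F" and xF: "x = emb F"
    using xL by (auto simp: laurentQ_eq)
  have EaF: "E a g = emb F" using xg xF by (simp add: mu_iter)
  let ?K = "(\<lambda>m. pairing m v) ` Poly_Mapping.keys g"
  obtain N where Nge: "\<And>k. k \<in> ?K \<Longrightarrow> int a * k \<le> int N"
    and eqN: "\<And>k. restr k F * PP ^ N = restr k g * PP ^ nat (int N - int a * k)"
    using E_key[OF EaF] by blast
  define y where "y = E (a - b) g"
  have y1: "y = (mu \<omega> v ^^ (a - b)) (emb g)" by (simp add: y_def mu_iter)
  have "(mu \<omega> v ^^ b) y = (mu \<omega> v ^^ (b + (a - b))) (emb g)"
    by (simp add: y1 funpow_add)
  also have "b + (a - b) = a" using ba by simp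
  finally have xy: "x = (mu \<omega> v ^^ b) y" using xg by simp
  have iab: "int (a - b) = int a - int b" using ba by simp
  have "y \<in> laurentQ"
    unfolding y_def E_graded
  proof (rule laurentQ_sum)
    fix k assume kK: "k \<in> ?K"
    show "emb (restr k g) * emb PP powi (- (int (a - b) * k)) \<in> laurentQ"
    proof (cases "k \<le> 0")
      case True
      hence "- (int (a - b) * k) \<ge> 0" by (simp add: mult_nonneg_nonpos)
      hence "emb (restr k g) * emb PP powi (- (int (a - b) * k))
          = emb (restr k g * PP ^ nat (- (int (a - b) * k)))"
        by (simp add: D_powi_nat emb_mult)
      thus ?thesis
        by (simp add: emb_laurentQ Qp_mult restr_Qp g Qp_power Qp_PP)
    next
      case False
      hence k0: "k > 0" by simp
      have ak0: "int a * k \<ge> 0" using k0 by simp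
      have Nsplit: "N = nat (int a * k) + nat (int N - int a * k)"
        using Nge[OF kK] ak0 by linarith
      have "(restr k F * PP ^ nat (int a * k)) * PP ^ nat (int N - int a * k)
          = restr k g * PP ^ nat (int N - int a * k)"
        using eqN[of k] by (subst (asm) Nsplit) (simp add: power_add mult.assoc)
      hence gk: "restr k g = restr k F * PP ^ nat (int a * k)"
        using PP_nz by simp
      have "emb PP ^ nat (int a * k) * emb PP powi (- (int (a - b) * k))
          = emb PP powi (int a * k) * emb PP powi (- (int (a - b) * k))"
        using ak0 by (simp add: power_int_def)
      also have "\<dots> = emb PP powi (int a * k + - (int (a - b) * k))"
        using D_nz by (rule power_int_add[symmetric, OF disjI1])
      also have "\<dots> = emb PP powi (int b * k)"
        by (rule arg_cong[where f="\<lambda>e. emb PP powi e"]) (simp add: iab algebra_simps)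
      also have "\<dots> = emb (PP ^ nat (int b * k))"
        using k0 by (simp add: D_powi_nat)
      finally have pw: "emb PP ^ nat (int a * k) * emb PP powi (- (int (a - b) * k)) = emb (PP ^ nat (int b * k))" .
      have "emb (restr k g) * emb PP powi (- (int (a - b) * k))
          = emb (restr k F) * (emb PP ^ nat (int a * k) * emb PP powi (- (int (a - b) * k)))"
        by (simp add: gk emb_mult emb_power mult.assoc)
      also have "\<dots> = emb (restr k F * PP ^ nat (int b * k))"
        by (simp add: pw emb_mult)
      finally show ?thesis
        by (simp add: emb_laurentQ Qp_mult restr_Qp F Qp_power Qp_PP)
    qed
  qed
  thus ?thesis using xy by blast
qed

end



lemma additive_coord:
  fixes f :: "lat \<Rightarrow> int"
  assumes add: "\<And>x y. f (x + y) = f x + f y"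
  shows "f (a, b) = a * f (1, 0) + b * f (0, 1)"
proof -
  have f0: "f 0 = 0" using add[of 0 0] by simp
  have fneg: "f (- x) = - f x" for x using add[of x "-x"] f0 by simp
  have nat1: "f (int n, 0) = int n * f (1, 0)" for n
  proof (induction n)
    case 0 thus ?case using f0 by (simp add: zero_prod_def)
  next
    case (Suc n)
    have "f (int (Suc n), 0) = f ((int n, 0) + (1, 0))" by (simp add: add.commute)
    also have "\<dots> = f (int n, 0) + f (1, 0)" by (rule add)
    finally show ?case using Suc by (simp add: algebra_simps)
  qed
  have nat2: "f (0, int n) = int n * f (0, 1)" for n
  proof (induction n)
    case 0 thus ?case using f0 by (simp add: zero_prod_def)
  next
    case (Suc n)
    have "f (0, int (Suc n)) = f ((0, int n) + (0, 1))" by (simp add: add.commute)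
    also have "\<dots> = f (0, int n) + f (0, 1)" by (rule add)
    finally show ?case using Suc by (simp add: algebra_simps)
  qed
  have i1: "f (c, 0) = c * f (1, 0)" for c
  proof (cases "c \<ge> 0")
    case True thus ?thesis using nat1[of "nat c"] by simp
  next
    case False
    have "f (c, 0) = f (- (int (nat (- c)), 0))" using False by simp
    also have "\<dots> = - f (int (nat (- c)), 0)" by (rule fneg)
    also have "\<dots> = - (int (nat (- c)) * f (1, 0))" by (simp only: nat1)
    also have "\<dots> = c * f (1, 0)" using False by simp
    finally show ?thesis .
  qed
  have i2: "f (0, c) = c * f (0, 1)" for c
  proof (cases "c \<ge> 0")
    case True thus ?thesis using nat2[of "nat c"] by simp
  next
    case False
    have "f (0, c) = f (- (0, int (nat (- c))))" using False by simp
    also have "\<dots> = - f (0, int (nat (- c)))" by (rule fneg)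
    also have "\<dots> = - (int (nat (- c)) * f (0, 1))" by (simp only: nat2)
    also have "\<dots> = c * f (0, 1)" using False by simp
    finally show ?thesis .
  qed
  have "f (a, b) = f ((a, 0) + (0, b))" by simp
  also have "\<dots> = f (a, 0) + f (0, b)" by (rule add)
  finally show ?thesis by (simp only: i1[of a] i2[of b])
qed

lemma omega_formula:
  assumes bil: "bilinear_form \<omega>" and sk: "skew_form \<omega>"
  shows "\<omega> u x = \<omega> (1, 0) (0, 1) * (fst u * snd x - snd u * fst x)"
proof -
  obtain a b where u: "u = (a, b)" by (cases u)
  obtain c d where x: "x = (c, d)" by (cases x)
  have l1: "\<omega> (a, b) y = a * \<omega> (1, 0) y + b * \<omega> (0, 1) y" for y
  proof -
    have "\<And>x x'. \<omega> (x + x') y = \<omega> x y + \<omega> x' y" using bil unfolding bilinear_form_def by blast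
    from additive_coord[of "\<lambda>u. \<omega> u y", OF this] show ?thesis .
  qed
  have l2: "\<omega> z (c, d) = c * \<omega> z (1, 0) + d * \<omega> z (0, 1)" for z
  proof -
    have "\<And>x x'. \<omega> z (x + x') = \<omega> z x + \<omega> z x'" using bil unfolding bilinear_form_def by blast
    from additive_coord[of "\<omega> z", OF this] show ?thesis .
  qed
  have s1: "\<omega> (1, 0) (1, 0) = 0" "\<omega> (0, 1) (0, 1) = 0" "\<omega> (0, 1) (1, 0) = - \<omega> (1, 0) (0, 1)"
    using sk[unfolded skew_form_def, rule_format, of "(1,0)" "(1,0)"]
      sk[unfolded skew_form_def, rule_format, of "(0,1)" "(0,1)"]
      sk[unfolded skew_form_def, rule_format, of "(0,1)" "(1,0)"] by linarith+
  show ?thesis unfolding u x using s1 by (simp add: l1 l2 algebra_simps)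
qed

lemma wv_holds:
  assumes "bilinear_form \<omega>" "skew_form \<omega>"
  shows "pairing (omega_dual \<omega> v) v = 0"
  using omega_formula[OF assms, of "(1,0)" v] omega_formula[OF assms, of "(0,1)" v]
  by (simp add: pairing_def omega_dual_def algebra_simps)

lemma MONO:
  assumes "bilinear_form \<omega>" "skew_form \<omega>" "b \<le> a" "x \<in> laurentQ"
    "x \<in> (mu \<omega> v ^^ a) ` laurentQ"
  shows "x \<in> (mu \<omega> v ^^ b) ` laurentQ"
  using mono_step[OF wv_holds[OF assms(1,2)] assms(3-5)] .

lemma upper_family:
  assumes bil: "bilinear_form \<omega>" and sk: "skew_form \<omega>" and I: "I \<noteq> {}"
    and cnt: "\<And>v. (\<forall>i\<in>I. count (W i) v \<le> count V v) \<and> (\<exists>i\<in>I. count (W i) v = count V v)"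
  shows "upper \<omega> V = (\<Inter>i\<in>I. upper \<omega> (W i))"
proof
  show "upper \<omega> V \<subseteq> (\<Inter>i\<in>I. upper \<omega> (W i))"
  proof (clarify)
    fix x i assume x: "x \<in> upper \<omega> V" and i: "i \<in> I"
    have xL: "x \<in> laurentQ" and xv: "\<And>v. x \<in> (mu \<omega> v ^^ count V v) ` laurentQ"
      using x by (auto simp: upper_def)
    show "x \<in> upper \<omega> (W i)"
      unfolding upper_def using xL MONO[OF bil sk _ xL xv] cnt i by blast
  qed
next
  show "(\<Inter>i\<in>I. upper \<omega> (W i)) \<subseteq> upper \<omega> V"
  proof
    fix x assume x: "x \<in> (\<Inter>i\<in>I. upper \<omega> (W i))"
    obtain i0 where "i0 \<in> I" using I by blast
    hence "x \<in> upper \<omega> (W i0)" using x by blast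
    hence xL: "x \<in> laurentQ" by (simp add: upper_def)
    have "x \<in> (mu \<omega> v ^^ count V v) ` laurentQ" for v
    proof -
      obtain i where i: "i \<in> I" "count (W i) v = count V v" using cnt[of v] by blast
      hence "x \<in> upper \<omega> (W i)" using x by blast
      hence "x \<in> (mu \<omega> v ^^ count (W i) v) ` laurentQ" unfolding upper_def by blast
      thus ?thesis using i(2) by simp
    qed
    thus "x \<in> upper \<omega> V" using xL by (auto simp: upper_def)
  qed
qed

lemma count_sum_rep_out:
  "x \<notin> f ` K \<Longrightarrow> count (\<Sum>k\<in>K. replicate_mset (m k) (f k)) x = 0"
  by (auto simp: count_sum intro!: sum.neutral)

lemma count_sum_rep_in:
  assumes "finite K" "inj_on f K" "k0 \<in> K"
  shows "count (\<Sum>k\<in>K. replicate_mset (m k) (f k)) (f k0) = m k0"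
proof -
  have "count (\<Sum>k\<in>K. replicate_mset (m k) (f k)) (f k0) = (\<Sum>k\<in>K. if k0 = k then m k else 0)"
    unfolding count_sum
    by (rule sum.cong) (use assms in \<open>auto simp: inj_on_def\<close>)
  also have "\<dots> = m k0" using assms by simp
  finally show ?thesis .
qed

lemma collinear_self: "collinear u u" and collinear_neg: "collinear u (- u)"
  by (auto simp: collinear_def)

lemma upper_CD:
  assumes bil: "bilinear_form \<omega>" and sk: "skew_form \<omega>" and u: "u \<noteq> 0" and p: "1 \<le> p"
    and K: "finite K" and inj: "inj_on f K" and nc: "\<forall>k\<in>K. \<not> collinear u (f k)"
  shows "upper \<omega> (replicate_mset p u + replicate_mset q (- u) + (\<Sum>k\<in>K. replicate_mset (m k) (f k)))
     = upper \<omega> (replicate_mset p u + replicate_mset q (- u))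
       \<inter> (\<Inter>k\<in>K. upper \<omega> (replicate_mset 1 u + replicate_mset (m k) (f k)))"
proof -
  define W where "W i = (case i of None \<Rightarrow> replicate_mset p u + replicate_mset q (- u)
       | Some k \<Rightarrow> replicate_mset 1 u + replicate_mset (m k) (f k))" for i
  let ?V = "replicate_mset p u + replicate_mset q (- u) + (\<Sum>k\<in>K. replicate_mset (m k) (f k))"
  let ?I = "insert None (Some ` K)"
  have fu: "\<And>k. k \<in> K \<Longrightarrow> f k \<noteq> u \<and> f k \<noteq> - u"
    using nc by (auto simp: collinear_def)
  have um: "u \<noteq> - u" using u by (cases u) (auto simp: zero_prod_def)
  have cnt: "(\<forall>i\<in>?I. count (W i) x \<le> count ?V x) \<and> (\<exists>i\<in>?I. count (W i) x = count ?V x)" for x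
  proof -
    consider "x = u" | "x = - u" | k0 where "k0 \<in> K" "x = f k0" | "x \<noteq> u" "x \<noteq> - u" "x \<notin> f ` K"
      by blast
    thus ?thesis
    proof cases
      case 1
      have "u \<notin> f ` K" using fu by auto
      thus ?thesis using 1 p um fu by (auto simp: W_def count_sum_rep_out intro!: bexI[of _ None])
    next
      case 2
      have "- u \<notin> f ` K"
      proof
        assume "- u \<in> f ` K"
        then obtain k where "k \<in> K" "f k = - u" by auto
        thus False using fu[of k] by simp
      qed
      thus ?thesis using 2 um fu by (auto simp: W_def count_sum_rep_out intro!: bexI[of _ None])
    next
      case 3
      have c: "count (\<Sum>k\<in>K. replicate_mset (m k) (f k)) x = m k0"
        using 3 count_sum_rep_in[OF K inj] by simp
      have "\<forall>i\<in>?I. count (W i) x \<le> count ?V x"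
        using 3 c fu inj by (auto simp: W_def inj_on_def)
      moreover have "count (W (Some k0)) x = count ?V x"
        using 3 c fu by (auto simp: W_def)
      ultimately show ?thesis using 3 by blast
    next
      case 4
      thus ?thesis by (auto simp: W_def count_sum_rep_out intro!: bexI[of _ None])
    qed
  qed
  have "upper \<omega> ?V = (\<Inter>i\<in>?I. upper \<omega> (W i))"
    by (rule upper_family[OF bil sk _ cnt]) simp
  also have "\<dots> = upper \<omega> (replicate_mset p u + replicate_mset q (- u))
       \<inter> (\<Inter>k\<in>K. upper \<omega> (replicate_mset 1 u + replicate_mset (m k) (f k)))"
    by (simp add: W_def)
  finally show ?thesis .
qed




lemma image_mset_sum: "image_mset f (sum g K) = (\<Sum>k\<in>K. image_mset f (g k))"
  by (induction K rule: infinite_finite_induct) auto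

lemma omega_self: "bilinear_form \<omega> \<Longrightarrow> skew_form \<omega> \<Longrightarrow> \<omega> u u = 0"
  using omega_formula[of \<omega> u u] by (simp add: algebra_simps)

lemma omega_neg: "bilinear_form \<omega> \<Longrightarrow> skew_form \<omega> \<Longrightarrow> \<omega> u (- u) = 0"
  using omega_formula[of \<omega> u "- u"] by (simp add: algebra_simps)

lemma omega_shift: "bilinear_form \<omega> \<Longrightarrow> skew_form \<omega> \<Longrightarrow> \<omega> u (x + smul c u) = \<omega> u x"
  using omega_formula[of \<omega> u "x + smul c u"] omega_formula[of \<omega> u x]
  by (simp add: smul_def algebra_simps)

lemma smul_0[simp]: "smul 0 x = 0"
  by (simp add: smul_def zero_prod_def)

lemma mutate_mset:
  assumes bil: "bilinear_form \<omega>" and sk: "skew_form \<omega>"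
    and V: "mset xs = replicate_mset mp v1 + replicate_mset mm (- v1) + (\<Sum>k\<in>K. replicate_mset (mk k) (vk k))"
    and j: "j < length xs" and xj: "xs ! j = v1" and mp: "mp \<ge> 1"
  shows "mset (mutate \<omega> xs j) = replicate_mset (mm + 1) (- v1) + replicate_mset (mp - 1) v1
          + (\<Sum>k\<in>K. replicate_mset (mk k) (vk k + smul (max 0 (\<omega> v1 (vk k))) v1))"
proof -
  define h where "h x = x + smul (max 0 (\<omega> v1 x)) v1" for x
  have mut: "mutate \<omega> xs j = (map h xs)[j := - v1]"
    by (rule nth_equalityI) (auto simp: mutate_def h_def nth_list_update xj)
  have h1: "h v1 = v1" using omega_self[OF bil sk] by (simp add: h_def)
  have h2: "h (- v1) = - v1" using omega_neg[OF bil sk] by (simp add: h_def)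
  have im: "mset (map h xs) = replicate_mset mp v1 + replicate_mset mm (- v1)
      + (\<Sum>k\<in>K. replicate_mset (mk k) (vk k + smul (max 0 (\<omega> v1 (vk k))) v1))"
    by (simp add: V image_mset_sum h1 h2) (simp add: h_def)
  obtain n where n: "mp = Suc n" using mp by (cases mp) auto
  have "mset (mutate \<omega> xs j) = add_mset (- v1) (mset (map h xs) - {#v1#})"
    unfolding mut using j by (simp add: mset_update xj h1)
  also have "\<dots> = replicate_mset (mm + 1) (- v1) + replicate_mset (mp - 1) v1
          + (\<Sum>k\<in>K. replicate_mset (mk k) (vk k + smul (max 0 (\<omega> v1 (vk k))) v1))"
    using im by (simp add: n)
  finally show ?thesis .
qed

lemma collinear_shift_neg: "collinear (- u) (x + smul c u) \<longleftrightarrow> collinear u x"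
  by (simp add: collinear_def smul_def algebra_simps)

lemma prim_nz: "primitive v \<Longrightarrow> v \<noteq> 0"
  by (auto simp: primitive_def zero_prod_def)

theorem lemma3p3:
  fixes \<omega> :: "lat \<Rightarrow> lat \<Rightarrow> int"
  assumes "bilinear_form \<omega>" and "skew_form \<omega>" and "nondegenerate \<omega>"
  shows
   "upper \<omega> {#} = laurentQ
    \<and> (\<forall>(V :: lat multiset) (A :: 'i set) (Vs :: 'i \<Rightarrow> lat multiset).
         A \<noteq> {} \<longrightarrow> prim_coll V \<longrightarrow> (\<forall>\<alpha>\<in>A. prim_coll (Vs \<alpha>)) \<longrightarrow>
         (\<forall>v. (\<forall>\<alpha>\<in>A. count (Vs \<alpha>) v \<le> count V v) \<and> (\<exists>\<alpha>\<in>A. count (Vs \<alpha>) v = count V v)) \<longrightarrow>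
         upper \<omega> V = (\<Inter>\<alpha>\<in>A. upper \<omega> (Vs \<alpha>)))
    \<and> (\<forall>V :: lat multiset. prim_coll V \<longrightarrow>
         upper \<omega> V = (\<Inter>v. upper \<omega> (replicate_mset (count V v) v)))
    \<and> (\<forall>(v1 :: lat) (mp :: nat) (mm :: nat) (K :: nat set) (vk :: nat \<Rightarrow> lat) (mk :: nat \<Rightarrow> nat).
         let V = replicate_mset mp v1 + replicate_mset mm (- v1)
                 + (\<Sum>k\<in>K. replicate_mset (mk k) (vk k))
         in
         mp \<ge> 1 \<longrightarrow> finite K \<longrightarrow> inj_on vk K \<longrightarrow> (\<forall>k\<in>K. \<not> collinear v1 (vk k)) \<longrightarrow>
         prim_coll V \<longrightarrow>
         (upper \<omega> V = upper \<omega> (replicate_mset mp v1 + replicate_mset mm (- v1))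
             \<inter> (\<Inter>k\<in>K. upper \<omega> (replicate_mset 1 v1 + replicate_mset (mk k) (vk k))))
         \<and> (\<forall>(xs :: lat list) (j :: nat).
              mset xs = V \<longrightarrow> j < length xs \<longrightarrow> xs ! j = v1 \<longrightarrow>
              mset (mutate \<omega> xs j) =
                  replicate_mset (mm + 1) (- v1) + replicate_mset (mp - 1) v1
                  + (\<Sum>k\<in>K. replicate_mset (mk k) (vk k + smul (max 0 (\<omega> v1 (vk k))) v1))
              \<and> (prim_coll (mset (mutate \<omega> xs j)) \<longrightarrow>
                 upper \<omega> (mset (mutate \<omega> xs j)) =
                   upper \<omega> (replicate_mset (mm + 1) (- v1) + replicate_mset (mp - 1) v1)
                   \<inter> (\<Inter>k\<in>K. upper \<omega> (replicate_mset 1 (- v1)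
                        + replicate_mset (mk k) (vk k + smul (max 0 (\<omega> v1 (vk k))) v1))))))"
proof -
  note bil = assms(1) and sk = assms(2)
  have A: "upper \<omega> {#} = laurentQ" by (simp add: upper_def)
  have B: "\<forall>(V :: lat multiset) (A :: 'i set) (Vs :: 'i \<Rightarrow> lat multiset).
         A \<noteq> {} \<longrightarrow> prim_coll V \<longrightarrow> (\<forall>\<alpha>\<in>A. prim_coll (Vs \<alpha>)) \<longrightarrow>
         (\<forall>v. (\<forall>\<alpha>\<in>A. count (Vs \<alpha>) v \<le> count V v) \<and> (\<exists>\<alpha>\<in>A. count (Vs \<alpha>) v = count V v)) \<longrightarrow>
         upper \<omega> V = (\<Inter>\<alpha>\<in>A. upper \<omega> (Vs \<alpha>))"
  proof (intro allI impI)
    fix V :: "lat multiset" and A :: "'i set" and Vs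
    assume "A \<noteq> {}" and "\<forall>v. (\<forall>\<alpha>\<in>A. count (Vs \<alpha>) v \<le> count V v) \<and> (\<exists>\<alpha>\<in>A. count (Vs \<alpha>) v = count V v)"
    thus "upper \<omega> V = (\<Inter>\<alpha>\<in>A. upper \<omega> (Vs \<alpha>))"
      by (intro upper_family[OF bil sk]) auto
  qed
  have B2: "\<forall>V :: lat multiset. prim_coll V \<longrightarrow>
         upper \<omega> V = (\<Inter>v. upper \<omega> (replicate_mset (count V v) v))"
  proof (intro allI impI)
    fix V :: "lat multiset"
    show "upper \<omega> V = (\<Inter>v. upper \<omega> (replicate_mset (count V v) v))"
      by (rule upper_family[OF bil sk]) auto
  qed
  have C: "\<forall>(v1 :: lat) (mp :: nat) (mm :: nat) (K :: nat set) (vk :: nat \<Rightarrow> lat) (mk :: nat \<Rightarrow> nat).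
         let V = replicate_mset mp v1 + replicate_mset mm (- v1)
                 + (\<Sum>k\<in>K. replicate_mset (mk k) (vk k))
         in
         mp \<ge> 1 \<longrightarrow> finite K \<longrightarrow> inj_on vk K \<longrightarrow> (\<forall>k\<in>K. \<not> collinear v1 (vk k)) \<longrightarrow>
         prim_coll V \<longrightarrow>
         (upper \<omega> V = upper \<omega> (replicate_mset mp v1 + replicate_mset mm (- v1))
             \<inter> (\<Inter>k\<in>K. upper \<omega> (replicate_mset 1 v1 + replicate_mset (mk k) (vk k))))
         \<and> (\<forall>(xs :: lat list) (j :: nat).
              mset xs = V \<longrightarrow> j < length xs \<longrightarrow> xs ! j = v1 \<longrightarrow>
              mset (mutate \<omega> xs j) =
                  replicate_mset (mm + 1) (- v1) + replicate_mset (mp - 1) v1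
                  + (\<Sum>k\<in>K. replicate_mset (mk k) (vk k + smul (max 0 (\<omega> v1 (vk k))) v1))
              \<and> (prim_coll (mset (mutate \<omega> xs j)) \<longrightarrow>
                 upper \<omega> (mset (mutate \<omega> xs j)) =
                   upper \<omega> (replicate_mset (mm + 1) (- v1) + replicate_mset (mp - 1) v1)
                   \<inter> (\<Inter>k\<in>K. upper \<omega> (replicate_mset 1 (- v1)
                        + replicate_mset (mk k) (vk k + smul (max 0 (\<omega> v1 (vk k))) v1)))))"
    unfolding Let_def
  proof (intro allI impI conjI)
    fix v1 :: lat and mp mm :: nat and K :: "nat set" and vk :: "nat \<Rightarrow> lat" and mk :: "nat \<Rightarrow> nat"
    assume mp: "mp \<ge> 1" and K: "finite K" and inj: "inj_on vk K"
      and nc: "\<forall>k\<in>K. \<not> collinear v1 (vk k)"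
      and pc: "prim_coll (replicate_mset mp v1 + replicate_mset mm (- v1) + (\<Sum>k\<in>K. replicate_mset (mk k) (vk k)))"
    have "v1 \<in># replicate_mset mp v1 + replicate_mset mm (- v1) + (\<Sum>k\<in>K. replicate_mset (mk k) (vk k))"
      using mp by simp
    hence v1nz: "v1 \<noteq> 0" using pc prim_nz by (auto simp: prim_coll_def)
    show "upper \<omega> (replicate_mset mp v1 + replicate_mset mm (- v1) + (\<Sum>k\<in>K. replicate_mset (mk k) (vk k)))
      = upper \<omega> (replicate_mset mp v1 + replicate_mset mm (- v1))
             \<inter> (\<Inter>k\<in>K. upper \<omega> (replicate_mset 1 v1 + replicate_mset (mk k) (vk k)))"
      by (rule upper_CD[OF bil sk v1nz mp K inj nc])
    fix xs :: "lat list" and j :: nat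
    assume xs: "mset xs = replicate_mset mp v1 + replicate_mset mm (- v1) + (\<Sum>k\<in>K. replicate_mset (mk k) (vk k))"
      and j: "j < length xs" and xj: "xs ! j = v1"
    show "mset (mutate \<omega> xs j) =
                  replicate_mset (mm + 1) (- v1) + replicate_mset (mp - 1) v1
                  + (\<Sum>k\<in>K. replicate_mset (mk k) (vk k + smul (max 0 (\<omega> v1 (vk k))) v1))"
      by (rule mutate_mset[OF bil sk xs j xj mp])
    define f where "f k = vk k + smul (max 0 (\<omega> v1 (vk k))) v1" for k
    have injf: "inj_on f K"
    proof (rule inj_onI)
      fix k l assume k: "k \<in> K" and l: "l \<in> K" and e: "f k = f l"
      have "\<omega> v1 (f k) = \<omega> v1 (f l)" using e by simp
      hence "\<omega> v1 (vk k) = \<omega> v1 (vk l)" by (simp add: f_def omega_shift[OF bil sk])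
      hence "vk k = vk l" using e by (simp add: f_def)
      thus "k = l" using inj k l by (auto simp: inj_on_def)
    qed
    have ncf: "\<forall>k\<in>K. \<not> collinear (- v1) (f k)"
      using nc by (simp add: f_def collinear_shift_neg)
    have nz: "- v1 \<noteq> 0" using v1nz by simp
    have mm1: "1 \<le> mm + 1" by simp
    show "upper \<omega> (mset (mutate \<omega> xs j)) =
                   upper \<omega> (replicate_mset (mm + 1) (- v1) + replicate_mset (mp - 1) v1)
                   \<inter> (\<Inter>k\<in>K. upper \<omega> (replicate_mset 1 (- v1)
                        + replicate_mset (mk k) (vk k + smul (max 0 (\<omega> v1 (vk k))) v1)))"
      using upper_CD[OF bil sk nz mm1 K injf ncf, of "mp - 1" mk] mutate_mset[OF bil sk xs j xj mp]
      by (simp add: f_def)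
  qed
  show ?thesis using A B B2 C by blast
qed


end
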